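(* (1) If $\mathsf{A}_0,\dots,\mathsf{A}_{n-1}$ and $\mathsf{B}\neq\mathsf{0}$ are in $\mathbb{S}$ and $j<n$ is such that $\mathsf{A}_i\le\mathsf{A}_j$ for all $i<n$, then $\big(\sum_{i<n}\mathsf{A}_i\big)*\exp(\mathsf{B})\equiv\mathsf{A}_j*\exp(\mathsf{B})$. (2) If $\mathsf{A}\in\mathbb{S}$, then for every natural number $m$, $\exp(\mathsf{A})\cdot m\le\exp(\mathsf{A}+\mathsf{1})$.
   Context: Standard generating sets: $\mathrm{Homeo}_+(I)$ acts on $I=[0,1]$ on the right. Support $\mathrm{supt}(f)=\{t:tf\ne t\}$; extended support = interior of its closure; orbitals = components of the support, endpoints = transition points; a bump has exactly one orbital, positive if $tf>t$ there, else negative. A marking assigns to each bump $b$ with support $(u,v)$ a point $s_b\in(u,v)$; feet of $b$: $(u,s_b)$ and $[t_b,v)$ with $t_b=s_bb$ ($b$ positive) or $s_bb^{-1}$ ($b$ negative). A marked function has finitely many bumps, each marked. A finite set of marked functions is fast if no bump occurs in two of its elements and distinct bumps have disjoint feet. A standard function is a marked function whose extended support is an interval, with all positive bumps right of all negative bumps, and #positive $-$ #negative bumps $\in\{0,1\}$. For standard $f,g$: $f\ll g$ iff extended supports disjoint with $f$'s to the left; $f\sqsubset g$ iff closure of extended support of $f$ lies in extended support of $g$; $f<g$ iff $f\ll g$ or $f\sqsubset g$. $f^\circ$: if $f$ has $>2$ orbitals, $f$ restricted to the union of its non-extreme orbitals; if $f$ has 1 or 2 orbitals and the left foot of its positive bump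 is $(r,s)$, a positive bump with support $(r,s)$. $(f,g)$ is a standard pair if $\{f,g\}$ is fast and either $f\ll g$ or ($f\sqsubset g$ and $(g^\circ,f)$ is a standard pair). $\mathcal{S}$ = finite sets of standard functions, pairwise $<$-comparable, each pair $f<g$ a standard pair. Oscillation $o(f,g)$ for $f<g$: number of orbitals of $g$ containing a transition point of $f$. Signatures: the signature of $A\in\mathcal S$ is $(f,g)\mapsto o(f,g)$ on pairs $f<g$ of $A$; functions on pairs of finite linear orders are equivalent if an order-preserving bijection of bases carries one to the other; $\mathbb{S}$ is the set of signatures of members of $\mathcal S$ up to equivalence. $\mathsf{0},\mathsf{1}$: base sizes $0,1$. $\mathsf{A}+\mathsf{B}$: base $A$ followed by $B$, agreeing with $\mathsf{A},\mathsf{B}$ on their bases, value $0$ across; $\sum_{i<n}$ is iterated sum left to right and $\mathsf{A}\cdot m=\sum_{i<m}\mathsf{A}$. $\exp(\mathsf{A})$: same base, values $\mathsf{A}(i,j)+1$. $\mathsf{A}*\exp(\mathsf{B})$: base $A$ followed by $B$, agreeing with $\mathsf{A}$ on $A$, with $\exp(\mathsf{B})$ on $B$, value $1$ across (these operations stay in $\mathbb{S}$). Inflation: for $\mathsf{A}$ with base $A$ and $m\in A$, $\mathsf{A}^m$ has base $A\cup\{i^m:i\in A,\ i<m,\ \mathsf{A}(i,m)>0\}$ (new symbols), the new elements placed above all elements of $A$ below $m$ and below $m$, with $i^m<j^m$ iff $i<j$; it extends $\mathsf{A}$ by, for $i,j<m\le k$ (with $\mathsf{A}(m,m)=\infty$):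 $\mathsf{A}^m(i^m,j^m)=\mathsf{A}(i,j)$, $\mathsf{A}^m(i,j^m)=\min(\mathsf{A}(j,m)-1,\mathsf{A}(i,m))$, $\mathsf{A}^m(i^m,k)=\min(\mathsf{A}(i,m),\mathsf{A}(m,k))$. $\mathsf{A}\le\mathsf{B}$ iff there is a sequence $\mathsf{B}_0=\mathsf{B},\dots,\mathsf{B}_n=\mathsf{A}$ with each $\mathsf{B}_{i+1}$ (equivalent to) a restriction to a subset of the base of an inflation of $\mathsf{B}_i$; $\mathsf{A}\equiv\mathsf{B}$ iff $\mathsf{A}\le\mathsf{B}\le\mathsf{A}$. *)

theory Defs
  imports "HOL-Analysis.Analysis"
begin

text \<open>Right action t f is written as function application f t.\<close>

definition homeo_plus :: "(real \<Rightarrow> real) \<Rightarrow> bool" where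
  "homeo_plus f \<longleftrightarrow> (\<exists>g. homeomorphism {0..1} {0..1} f g) \<and> strict_mono_on {0..1} f"

definition supt :: "(real \<Rightarrow> real) \<Rightarrow> real set" where
  "supt f = {t \<in> {0..1}. f t \<noteq> t}"

definition ext_supt :: "(real \<Rightarrow> real) \<Rightarrow> real set" where
  "ext_supt f = interior (closure (supt f))"

definition orbitals :: "(real \<Rightarrow> real) \<Rightarrow> real set set" where
  "orbitals f = {connected_component_set (supt f) x | x. x \<in> supt f}"

definition trans_pts :: "(real \<Rightarrow> real) \<Rightarrow> real set" where
  "trans_pts f = (\<Union>U\<in>orbitals f. {Inf U, Sup U})"

definition bump_of :: "(real \<Rightarrow> real) \<Rightarrow> real set \<Rightarrow> (real \<Rightarrow> real)" where
  "bump_of f U = (\<lambda>t. if t \<in> U then f t else t)"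

definition positive_orb :: "(real \<Rightarrow> real) \<Rightarrow> real set \<Rightarrow> bool" where
  "positive_orb f U \<longleftrightarrow> (\<forall>t\<in>U. t < f t)"

text \<open>A marked function: the homeomorphism together with a marking assigning to each orbital
  (i.e. to each bump) a point of it.\<close>
type_synonym mfun = "(real \<Rightarrow> real) \<times> (real set \<Rightarrow> real)"

definition marked :: "mfun \<Rightarrow> bool" where
  "marked p \<longleftrightarrow> homeo_plus (fst p) \<and> finite (orbitals (fst p))
     \<and> (\<forall>U\<in>orbitals (fst p). snd p U \<in> U)"

definition tpt :: "mfun \<Rightarrow> real set \<Rightarrow> real" where
  "tpt p U = (if positive_orb (fst p) U then fst p (snd p U)
              else inv_into {0..1} (fst p) (snd p U))"

definition lfoot :: "mfun \<Rightarrow> real set \<Rightarrow> real set" where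
  "lfoot p U = {Inf U<..<snd p U}"

definition rfoot :: "mfun \<Rightarrow> real set \<Rightarrow> real set" where
  "rfoot p U = {tpt p U..<Sup U}"

definition fast :: "mfun set \<Rightarrow> bool" where
  "fast F \<longleftrightarrow> finite F \<and> (\<forall>p\<in>F. marked p)
     \<and> (\<forall>p\<in>F. \<forall>q\<in>F. p \<noteq> q \<longrightarrow>
          (\<forall>U\<in>orbitals (fst p). \<forall>V\<in>orbitals (fst q). bump_of (fst p) U \<noteq> bump_of (fst q) V))
     \<and> (\<forall>p\<in>F. \<forall>q\<in>F. \<forall>U\<in>orbitals (fst p). \<forall>V\<in>orbitals (fst q).
          bump_of (fst p) U \<noteq> bump_of (fst q) V \<longrightarrow>
          (lfoot p U \<union> rfoot p U) \<inter> (lfoot q V \<union> rfoot q V) = {})"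

definition standard :: "mfun \<Rightarrow> bool" where
  "standard p \<longleftrightarrow> marked p
     \<and> connected (ext_supt (fst p)) \<and> ext_supt (fst p) \<noteq> {}
     \<and> (\<forall>U\<in>orbitals (fst p). \<forall>P\<in>orbitals (fst p).
          \<not> positive_orb (fst p) U \<and> positive_orb (fst p) P \<longrightarrow> Sup U \<le> Inf P)
     \<and> (let pos = card {U\<in>orbitals (fst p). positive_orb (fst p) U};
            neg = card {U\<in>orbitals (fst p). \<not> positive_orb (fst p) U}
        in pos = neg \<or> pos = Suc neg)"

definition ll :: "mfun \<Rightarrow> mfun \<Rightarrow> bool" where
  "ll p q \<longleftrightarrow> ext_supt (fst p) \<inter> ext_supt (fst q) = {}
     \<and> (\<forall>x\<in>ext_supt (fst p). \<forall>y\<in>ext_supt (fst q). x < y)"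

definition sqsub :: "mfun \<Rightarrow> mfun \<Rightarrow> bool" where
  "sqsub p q \<longleftrightarrow> closure (ext_supt (fst p)) \<subseteq> ext_supt (fst q)"

definition slt :: "mfun \<Rightarrow> mfun \<Rightarrow> bool" where
  "slt p q \<longleftrightarrow> ll p q \<or> sqsub p q"

definition nonextreme_orbs :: "(real \<Rightarrow> real) \<Rightarrow> real set set" where
  "nonextreme_orbs f = {U\<in>orbitals f. (\<exists>V\<in>orbitals f. Sup V \<le> Inf U)
                                    \<and> (\<exists>V\<in>orbitals f. Sup U \<le> Inf V)}"

definition circ :: "mfun \<Rightarrow> mfun \<Rightarrow> bool" where
  "circ p h \<longleftrightarrow>
     (card (orbitals (fst p)) > 2 \<and>
        h = ((\<lambda>t. if t \<in> \<Union>(nonextreme_orbs (fst p)) then fst p t else t), snd p))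
   \<or> ((card (orbitals (fst p)) = 1 \<or> card (orbitals (fst p)) = 2) \<and>
        (\<exists>P\<in>orbitals (fst p). positive_orb (fst p) P \<and>
           marked h \<and> orbitals (fst h) = {lfoot p P} \<and> positive_orb (fst h) (lfoot p P)))"

inductive std_pair :: "mfun \<Rightarrow> mfun \<Rightarrow> bool" where
  sp_ll: "fast {p, q} \<Longrightarrow> ll p q \<Longrightarrow> std_pair p q"
| sp_sq: "fast {p, q} \<Longrightarrow> sqsub p q \<Longrightarrow> circ q h \<Longrightarrow> std_pair h p \<Longrightarrow> std_pair p q"

definition Sfam :: "mfun set set" where
  "Sfam = {A. finite A \<and> (\<forall>p\<in>A. standard p)
      \<and> (\<forall>p\<in>A. \<forall>q\<in>A. p \<noteq> q \<longrightarrow> slt p q \<or> slt q p)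
      \<and> (\<forall>p\<in>A. \<forall>q\<in>A. slt p q \<longrightarrow> std_pair p q)}"

definition osc :: "mfun \<Rightarrow> mfun \<Rightarrow> nat" where
  "osc p q = card {U\<in>orbitals (fst q). \<exists>t\<in>trans_pts (fst p). t \<in> U}"

text \<open>A signature is represented canonically: base {0..<n} with its natural order, values
  on pairs i<j<n, normalized to 0 elsewhere (so equivalence of signatures is equality).\<close>
type_synonym sig = "nat \<times> (nat \<Rightarrow> nat \<Rightarrow> nat)"

definition sig_norm :: "sig \<Rightarrow> sig" where
  "sig_norm A = (fst A, \<lambda>i j. if i < j \<and> j < fst A then snd A i j else 0)"

definition SigSet :: "sig set" where
  "SigSet = {sig_norm (card A, \<lambda>i j. osc (e i) (e j)) | A e.
       A \<in> Sfam \<and> bij_betw e {..<card A} A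
       \<and> (\<forall>i j. i < j \<and> j < card A \<longrightarrow> slt (e i) (e j))}"

definition sig_zero :: sig where "sig_zero = (0, \<lambda>_ _. 0)"
definition sig_one :: sig where "sig_one = (1, \<lambda>_ _. 0)"

definition sig_plus :: "sig \<Rightarrow> sig \<Rightarrow> sig" where
  "sig_plus A B = sig_norm (fst A + fst B, \<lambda>i j.
      if j < fst A then snd A i j
      else if fst A \<le> i then snd B (i - fst A) (j - fst A) else 0)"

definition sig_sum :: "(nat \<Rightarrow> sig) \<Rightarrow> nat \<Rightarrow> sig" where
  "sig_sum A n = foldl sig_plus sig_zero (map A [0..<n])"

definition sig_times :: "sig \<Rightarrow> nat \<Rightarrow> sig" where
  "sig_times A m = sig_sum (\<lambda>_. A) m"

definition sig_exp :: "sig \<Rightarrow> sig" where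
  "sig_exp A = sig_norm (fst A, \<lambda>i j. snd A i j + 1)"

definition sig_star_exp :: "sig \<Rightarrow> sig \<Rightarrow> sig" where
  "sig_star_exp A B = sig_norm (fst A + fst B, \<lambda>i j.
      if j < fst A then snd A i j
      else if fst A \<le> i then snd B (i - fst A) (j - fst A) + 1 else 1)"

definition infl_new :: "sig \<Rightarrow> nat \<Rightarrow> nat list" where
  "infl_new A m = filter (\<lambda>i. 0 < snd A i m) [0..<m]"

text \<open>Position p of the inflated base: Inl i = old element i, Inr i = new element i^m.\<close>
definition infl_elt :: "sig \<Rightarrow> nat \<Rightarrow> nat \<Rightarrow> nat + nat" where
  "infl_elt A m p = (let r = length (infl_new A m) in
      if p < m then Inl p else if p < m + r then Inr (infl_new A m ! (p - m))
      else Inl (p - r))"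

fun infl_val :: "sig \<Rightarrow> nat \<Rightarrow> nat + nat \<Rightarrow> nat + nat \<Rightarrow> nat" where
  "infl_val A m (Inl i) (Inl j) = snd A i j"
| "infl_val A m (Inr i) (Inr j) = snd A i j"
| "infl_val A m (Inl i) (Inr j) = min (snd A j m - 1) (snd A i m)"
| "infl_val A m (Inr i) (Inl k) = (if k = m then snd A i m else min (snd A i m) (snd A m k))"

definition inflate :: "sig \<Rightarrow> nat \<Rightarrow> sig" where
  "inflate A m = sig_norm (fst A + length (infl_new A m),
      \<lambda>p q. infl_val A m (infl_elt A m p) (infl_elt A m q))"

definition restr :: "sig \<Rightarrow> nat \<Rightarrow> (nat \<Rightarrow> nat) \<Rightarrow> sig" where
  "restr A k g = sig_norm (k, \<lambda>i j. snd A (g i) (g j))"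

definition sig_step :: "sig \<Rightarrow> sig \<Rightarrow> bool" where
  "sig_step B A \<longleftrightarrow> (\<exists>m < fst B. \<exists>k g. strict_mono_on {..<k} g
      \<and> g ` {..<k} \<subseteq> {..<fst (inflate B m)} \<and> A = restr (inflate B m) k g)"

definition sig_le :: "sig \<Rightarrow> sig \<Rightarrow> bool" where
  "sig_le A B \<longleftrightarrow> sig_step\<^sup>*\<^sup>* B A"

definition sig_equiv :: "sig \<Rightarrow> sig \<Rightarrow> bool" where
  "sig_equiv A B \<longleftrightarrow> sig_le A B \<and> sig_le B A"

end

theory Submission
  imports Defs
begin

lemma fst_sig_norm[simp]: "fst (sig_norm A) = fst A"
  by (simp add: sig_norm_def)
lemma snd_sig_norm: "snd (sig_norm A) i j = (if i < j \<and> j < fst A then snd A i j else 0)"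
  by (simp add: sig_norm_def)
lemma sig_norm_eqI:
  assumes "n = n'" "\<And>i j. i < j \<Longrightarrow> j < n \<Longrightarrow> f i j = g i j"
  shows "sig_norm (n, f) = sig_norm (n', g)"
  using assms by (auto simp: sig_norm_def fun_eq_iff)

fun ilt :: "nat \<Rightarrow> nat + nat \<Rightarrow> nat + nat \<Rightarrow> bool" where
  "ilt m (Inl p) (Inl q) = (p < q)"
| "ilt m (Inr i) (Inr j) = (i < j)"
| "ilt m (Inl p) (Inr j) = (p < m)"
| "ilt m (Inr i) (Inl q) = (m \<le> q)"

fun ivalid :: "sig \<Rightarrow> nat \<Rightarrow> nat + nat \<Rightarrow> bool" where
  "ivalid T m (Inl p) = (p < fst T)"
| "ivalid T m (Inr i) = (i < m \<and> 0 < snd T i m)"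

definition emb_ok :: "sig \<Rightarrow> nat \<Rightarrow> nat \<Rightarrow> (nat \<Rightarrow> nat + nat) \<Rightarrow> bool" where
  "emb_ok T m k e \<longleftrightarrow> (\<forall>a<k. ivalid T m (e a))
     \<and> (\<forall>a b. a < b \<longrightarrow> b < k \<longrightarrow> ilt m (e a) (e b))"

lemma filter_len_less:
  assumes "i < j" "P i"
  shows "length (filter P [0..<i]) < length (filter P [0..<j])"
  using assms
proof (induction j)
  case 0 then show ?case by simp
next
  case (Suc j)
  then show ?case by (cases "i = j") (auto simp: less_Suc_eq)
qed

lemma filter_nth_idx:
  assumes "i < m" "P i"
  shows "filter P [0..<m] ! length (filter P [0..<i]) = i"
proof -
  have "[0..<m] = [0..<i] @ i # [Suc i..<m]"
  proof -
    have "[0..<m] = [0..<i] @ [i..<m]"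
      using upt_add_eq_append[of 0 i "m - i"] assms by simp
    also have "[i..<m] = i # [Suc i..<m]" using assms upt_conv_Cons by simp
    finally show ?thesis .
  qed
  then show ?thesis using assms by (simp add: nth_append)
qed

lemma step_intro:
  assumes m: "m < fst T" and ok: "emb_ok T m k e"
    and A: "A = sig_norm (k, \<lambda>a b. infl_val T m (e a) (e b))"
  shows "sig_step T A"
proof -
  define P where "P = (\<lambda>i. 0 < snd T i m)"
  have L: "infl_new T m = filter P [0..<m]" by (simp add: infl_new_def P_def)
  define r where "r = length (infl_new T m)"
  define pos where "pos x = (case x of Inl p \<Rightarrow> if p < m then p else p + r
      | Inr i \<Rightarrow> m + length (filter P [0..<i]))" for x
  have F1: "infl_elt T m (pos x) = x" if "ivalid T m x" for x
  proof (cases x)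
    case (Inl p) then show ?thesis by (auto simp: pos_def infl_elt_def r_def Let_def)
  next
    case (Inr i)
    then have "i < m" "P i" using that by (auto simp: P_def)
    then have "length (filter P [0..<i]) < r"
      using filter_len_less[of i m P] by (simp add: r_def L)
    moreover have idx: "infl_new T m ! length (filter P [0..<i]) = i"
      using L filter_nth_idx[of i m P, OF \<open>i < m\<close> \<open>P i\<close>] by simp
    ultimately show ?thesis using Inr
      by (auto simp: pos_def infl_elt_def r_def[symmetric] Let_def)
  qed
  have F2: "pos x < fst T + r" if "ivalid T m x" for x
  proof (cases x)
    case (Inl p) then show ?thesis using that m by (auto simp: pos_def)
  next
    case (Inr i)
    then have "i < m" "P i" using that by (auto simp: P_def)
    then have "length (filter P [0..<i]) < r"
      using filter_len_less[of i m P] by (simp add: r_def L)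
    then show ?thesis using Inr m by (auto simp: pos_def)
  qed
  have F3: "pos x < pos y" if "ivalid T m x" "ivalid T m y" "ilt m x y" for x y
  proof (cases x; cases y)
    fix p q assume "x = Inl p" "y = Inl q" then show ?thesis using that by (auto simp: pos_def)
  next
    fix p j assume "x = Inl p" "y = Inr j" then show ?thesis using that by (auto simp: pos_def)
  next
    fix i q assume xy: "x = Inr i" "y = Inl q"
    then have "i < m" "P i" using that by (auto simp: P_def)
    then have "length (filter P [0..<i]) < r"
      using filter_len_less[of i m P] by (simp add: r_def L)
    then show ?thesis using that xy by (auto simp: pos_def)
  next
    fix i j assume xy: "x = Inr i" "y = Inr j"
    then have "i < j" "P i" using that by (auto simp: P_def)
    then show ?thesis using xy filter_len_less[of i j P] by (auto simp: pos_def)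
  qed
  define g where "g a = pos (e a)" for a
  have V: "ivalid T m (e a)" if "a < k" for a using ok that by (auto simp: emb_ok_def)
  have sm: "strict_mono_on {..<k} g"
    unfolding strict_mono_on_def g_def using ok F3 V by (auto simp: emb_ok_def)
  have im: "g ` {..<k} \<subseteq> {..<fst (inflate T m)}"
    using F2 V by (auto simp: g_def inflate_def r_def)
  have "A = restr (inflate T m) k g"
    unfolding A restr_def
  proof (rule sig_norm_eqI)
    fix a b assume ab: "a < b" "b < k"
    have "g a < g b" using sm ab by (auto simp: strict_mono_on_def)
    moreover have "g b < fst T + r" using F2 V ab by (simp add: g_def)
    ultimately show "infl_val T m (e a) (e b) = snd (inflate T m) (g a) (g b)"
      using F1 V ab by (simp add: inflate_def snd_sig_norm r_def g_def)
  qed simp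
  then show ?thesis using m sm im unfolding sig_step_def by blast
qed

lemma step_elim:
  assumes "sig_step T A"
  shows "\<exists>m<fst T. \<exists>k e. emb_ok T m k e \<and> A = sig_norm (k, \<lambda>a b. infl_val T m (e a) (e b))"
proof -
  obtain m k g where m: "m < fst T" and sm: "strict_mono_on {..<k} g"
    and im: "g ` {..<k} \<subseteq> {..<fst (inflate T m)}" and A: "A = restr (inflate T m) k g"
    using assms unfolding sig_step_def by blast
  define r where "r = length (infl_new T m)"
  have fi: "fst (inflate T m) = fst T + r" by (simp add: inflate_def r_def)
  have srt: "sorted_wrt (<) (infl_new T m)" by (simp add: infl_new_def sorted_wrt_filter)
  have G1: "ivalid T m (infl_elt T m p)" if "p < fst T + r" for p
  proof -
    have s: "infl_new T m ! (p - m) \<in> set (infl_new T m)" if "p - m < r" using that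
      by (simp add: r_def)
    show ?thesis
    proof (cases "p < m")
      case True then show ?thesis using m by (simp add: infl_elt_def)
    next
      case False
      show ?thesis
      proof (cases "p < m + r")
        case True
        then have "p - m < r" using False by simp
        then have "infl_new T m ! (p - m) < m \<and> 0 < snd T (infl_new T m ! (p - m)) m"
          using s by (simp add: infl_new_def)
        then show ?thesis using True False
          by (simp add: infl_elt_def Let_def r_def[symmetric])
      next
        case False2: False
        then show ?thesis using False \<open>p < fst T + r\<close>
          by (simp add: infl_elt_def Let_def r_def[symmetric])
      qed
    qed
  qed
  have G2: "ilt m (infl_elt T m p) (infl_elt T m q)" if "p < q" "q < fst T + r" for p q
  proof -
    have "infl_new T m ! (p - m) < infl_new T m ! (q - m)" if "m \<le> p" "q < m + r"
      using sorted_wrt_nth_less[OF srt, of "p - m" "q - m"] that \<open>p < q\<close>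
      by (simp add: r_def)
    then show ?thesis using that
      by (auto simp: infl_elt_def Let_def r_def[symmetric])
  qed
  define e where "e a = infl_elt T m (g a)" for a
  have ok: "emb_ok T m k e"
    unfolding emb_ok_def e_def
  proof safe
    fix a assume "a < k" then show "ivalid T m (infl_elt T m (g a))" using im G1 fi by auto
  next
    fix a b assume "a < b" "b < k"
    then show "ilt m (infl_elt T m (g a)) (infl_elt T m (g b))"
      using G2 sm im fi by (auto simp: strict_mono_on_def)
  qed
  have "A = sig_norm (k, \<lambda>a b. infl_val T m (e a) (e b))"
    unfolding A restr_def
  proof (rule sig_norm_eqI)
    fix a b assume ab: "a < b" "b < k"
    have "g a < g b" using sm ab by (auto simp: strict_mono_on_def)
    moreover have "g b < fst T + r" using im fi ab by auto
    ultimately show "snd (inflate T m) (g a) (g b) = infl_val T m (e a) (e b)"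
      by (simp add: inflate_def snd_sig_norm r_def e_def)
  qed simp
  then show ?thesis using m ok by blast
qed


definition cval :: "sig \<Rightarrow> sig \<Rightarrow> sig \<Rightarrow> sig \<Rightarrow> nat \<Rightarrow> nat \<Rightarrow> nat" where
 "cval P X Q B i j = (
   if j < fst P then snd P i j
   else if j < fst P + fst X then (if fst P \<le> i then snd X (i - fst P) (j - fst P) else 0)
   else if j < fst P + fst X + fst Q then
     (if fst P + fst X \<le> i then snd Q (i - fst P - fst X) (j - fst P - fst X) else 0)
   else if fst P + fst X + fst Q \<le> i then snd B (i - fst P - fst X - fst Q) (j - fst P - fst X - fst Q) + 1
   else 1)"

definition ctx :: "sig \<Rightarrow> sig \<Rightarrow> sig \<Rightarrow> sig \<Rightarrow> sig" where
  "ctx P X Q B = sig_star_exp (sig_plus (sig_plus P X) Q) B"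

lemma ctx_eq: "ctx P X Q B = sig_norm (fst P + fst X + fst Q + fst B, cval P X Q B)"
  unfolding ctx_def sig_star_exp_def
proof (rule sig_norm_eqI)
  fix i j assume "i < j" "j < fst (sig_plus (sig_plus P X) Q) + fst B"
  then show "(if j < fst (sig_plus (sig_plus P X) Q) then snd (sig_plus (sig_plus P X) Q) i j
         else if fst (sig_plus (sig_plus P X) Q) \<le> i then snd B (i - fst (sig_plus (sig_plus P X) Q))
                (j - fst (sig_plus (sig_plus P X) Q)) + 1 else 1) = cval P X Q B i j"
    by (simp add: sig_plus_def snd_sig_norm cval_def)
qed (simp add: sig_plus_def)

lemma fst_ctx[simp]: "fst (ctx P X Q B) = fst P + fst X + fst Q + fst B"
  by (simp add: ctx_eq)

lemma snd_ctx: "snd (ctx P X Q B) i j =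
   (if i < j \<and> j < fst P + fst X + fst Q + fst B then cval P X Q B i j else 0)"
  by (simp add: ctx_eq snd_sig_norm)

lemma restr_step:
  assumes "0 < fst T" "strict_mono_on {..<k} g" "g ` {..<k} \<subseteq> {..<fst T}"
  shows "sig_step T (sig_norm (k, \<lambda>u v. snd T (g u) (g v)))"
proof (rule step_intro[of 0 T k "\<lambda>u. Inl (g u)"])
  show "emb_ok T 0 k (\<lambda>u. Inl (g u))" using assms
    by (auto simp: emb_ok_def strict_mono_on_def)
qed (use assms in auto)

lemma cong_step:
  assumes st: "sig_step X X'"
  shows "sig_step (ctx P X Q B) (ctx P X' Q B)"
proof -
  obtain m k e where m: "m < fst X" and ok: "emb_ok X m k e"
    and X': "X' = sig_norm (k, \<lambda>a b. infl_val X m (e a) (e b))"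
    using step_elim[OF st] by blast
  define p where "p = fst P"
  define x where "x = fst X"
  define q where "q = fst Q"
  define b where "b = fst B"
  define T where "T = ctx P X Q B"
  have kX: "fst X' = k" by (simp add: X')
  have sX': "snd X' u v = infl_val X m (e u) (e v)" if "u < v" "v < k" for u v
    using that by (simp add: X' snd_sig_norm)
  have V: "ivalid X m (e a)" if "a < k" for a using ok that by (auto simp: emb_ok_def)
  have O: "ilt m (e a) (e a')" if "a < a'" "a' < k" for a a' using ok that by (auto simp: emb_ok_def)
  have sT: "snd T i j = (if i < j \<and> j < p + x + q + b then cval P X Q B i j else 0)" for i j
    by (simp add: T_def snd_ctx p_def x_def q_def b_def)
  have TX: "snd T (z1 + p) (z2 + p) = snd X z1 z2" if "z1 < z2" "z2 < x" for z1 z2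
    using that by (simp add: sT cval_def p_def x_def)
  have TPX: "snd T i j = 0" if "i < p" "p \<le> j" "j < p + x" for i j
    using that by (simp add: sT cval_def p_def x_def)
  define sh where "sh = case_sum (\<lambda>z. Inl (z + p)) (\<lambda>z. Inr (z + p))"
  have valS: "infl_val T (m + p) (sh y1) (sh y2) = infl_val X m y1 y2"
    if "ivalid X m y1" "ivalid X m y2" "ilt m y1 y2" for y1 y2
  proof (cases y1; cases y2)
    fix z1 z2 assume "y1 = Inl z1" "y2 = Inl z2"
    then show ?thesis using that TX by (simp add: sh_def x_def)
  next
    fix z1 z2 assume "y1 = Inr z1" "y2 = Inr z2"
    then show ?thesis using that TX m by (simp add: sh_def x_def)
  next
    fix z1 z2 assume "y1 = Inl z1" "y2 = Inr z2"
    then show ?thesis using that TX m by (simp add: sh_def x_def)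
  next
    fix z1 z2 assume y: "y1 = Inr z1" "y2 = Inl z2"
    show ?thesis
    proof (cases "z2 = m")
      case True then show ?thesis using y that TX m by (simp add: sh_def x_def)
    next
      case False
      then have "m < z2" using y that by simp
      then show ?thesis using y that TX m False by (simp add: sh_def x_def)
    qed
  qed
  define e2 where "e2 u = (if u < p then Inl u else if u < p + k then sh (e (u - p))
      else Inl (u - k + x))" for u
  have ok2: "emb_ok T (m + p) (p + k + q + b) e2"
    unfolding emb_ok_def
  proof safe
    fix a assume a: "a < p + k + q + b"
    show "ivalid T (m + p) (e2 a)"
    proof (cases "a < p")
      case True then show ?thesis by (simp add: e2_def T_def p_def)
    next
      case False
      show ?thesis
      proof (cases "a < p + k")
        case True
        then have v: "ivalid X m (e (a - p))" using V False by simp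
        show ?thesis
        proof (cases "e (a - p)")
          case (Inl z) then show ?thesis using v True False
            by (simp add: e2_def sh_def T_def p_def x_def)
        next
          case (Inr z)
          then have "z < m" "0 < snd X z m" using v by auto
          moreover have "snd T (z + p) (m + p) = snd X z m" using TX \<open>z < m\<close> m
            by (simp add: x_def)
          ultimately show ?thesis using Inr True False by (simp add: e2_def sh_def)
        qed
      next
        case False2: False
        then show ?thesis using a False m by (simp add: e2_def T_def p_def x_def q_def b_def)
      qed
    qed
  next
    fix a a' assume aa: "a < a'" "a' < p + k + q + b"
    show "ilt (m + p) (e2 a) (e2 a')"
    proof (cases "a' < p")
      case True then show ?thesis using aa by (simp add: e2_def)
    next
      case F1: False
      show ?thesis
      proof (cases "a' < p + k")
        case T1: True
        have v': "ivalid X m (e (a' - p))" using V F1 T1 by simp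
        show ?thesis
        proof (cases "a < p")
          case True then show ?thesis using v' F1 T1
            by (cases "e (a' - p)") (auto simp: e2_def sh_def)
        next
          case False
          then have "ilt m (e (a - p)) (e (a' - p))" using O aa T1 by simp
          then show ?thesis using False F1 T1 aa
            by (cases "e (a - p)"; cases "e (a' - p)") (auto simp: e2_def sh_def)
        qed
      next
        case F2: False
        show ?thesis
        proof (cases "a < p")
          case True then show ?thesis using F1 F2 by (simp add: e2_def)
        next
          case False
          show ?thesis
          proof (cases "a < p + k")
            case True
            have v: "ivalid X m (e (a - p))" using V False True by simp
            then show ?thesis using False True F1 F2 m
              by (cases "e (a - p)") (auto simp: e2_def sh_def x_def)
          next
            case False2: False
            then show ?thesis using aa F1 F2 by (simp add: e2_def)
          qed
        qed
      qed
    qed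
  qed
  have eq: "ctx P X' Q B = sig_norm (p + k + q + b, \<lambda>u v. infl_val T (m + p) (e2 u) (e2 v))"
    unfolding ctx_eq kX
  proof (rule sig_norm_eqI)
    show "fst P + k + fst Q + fst B = p + k + q + b" by (simp add: p_def q_def b_def)
  next
    fix u v assume uv: "u < v" "v < fst P + k + fst Q + fst B"
    show "cval P X' Q B u v = infl_val T (m + p) (e2 u) (e2 v)"
    proof (cases "v < p")
      case True then show ?thesis using uv
        by (simp add: e2_def sT cval_def p_def x_def q_def b_def)
    next
      case F1: False
      show ?thesis
      proof (cases "v < p + k")
        case T1: True
        have v': "ivalid X m (e (v - p))" using V F1 T1 by simp
        show ?thesis
        proof (cases "u < p")
          case True
          then have c: "cval P X' Q B u v = 0" using F1 T1 by (simp add: cval_def kX p_def)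
          show ?thesis
          proof (cases "e (v - p)")
            case (Inl z)
            then have "z < x" using v' by (simp add: x_def)
            then show ?thesis using c Inl True F1 T1 TPX by (simp add: e2_def sh_def)
          next
            case (Inr z)
            then have "z < m" using v' by simp
            then have "snd T u (m + p) = 0" using TPX True m by (simp add: x_def)
            then show ?thesis using c Inr True F1 T1 by (simp add: e2_def sh_def)
          qed
        next
          case False
          then have "cval P X' Q B u v = snd X' (u - p) (v - p)" using F1 T1
            by (simp add: cval_def kX p_def)
          also have "\<dots> = infl_val X m (e (u - p)) (e (v - p))"
            using sX' uv False T1 by simp
          also have "\<dots> = infl_val T (m + p) (sh (e (u - p))) (sh (e (v - p)))"
            using valS[of "e (u - p)" "e (v - p)"] V O uv False T1 by simp
          finally show ?thesis using False F1 T1 uv by (simp add: e2_def)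
        qed
      next
        case F2: False
        show ?thesis
        proof (cases "u < p")
          case True then show ?thesis using uv F1 F2
            by (simp add: e2_def sT cval_def p_def x_def q_def b_def kX) arith
        next
          case False
          show ?thesis
          proof (cases "u < p + k")
            case True
            have v: "ivalid X m (e (u - p))" using V False True by simp
            show ?thesis
            proof (cases "e (u - p)")
              case (Inl z)
              then have "z < x" using v by (simp add: x_def)
              then show ?thesis using Inl uv False True F1 F2
                by (simp add: e2_def sh_def sT cval_def p_def x_def q_def b_def kX) arith
            next
              case (Inr z)
              then have z: "z < m" "0 < snd X z m" using v by auto
              have "snd T (z + p) (m + p) = snd X z m" using TX z m by (simp add: x_def)
              moreover have "v - k + x \<noteq> m + p" using F2 m by (simp add: x_def)
              moreover have "snd T (m + p) (v - k + x) = (if v < p + k + q then 0 else 1)"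
              proof -
                obtain d where d: "v = p + k + d" using F2 le_iff_add by (metis not_less)
                show ?thesis using uv d m by (simp add: sT cval_def p_def x_def q_def b_def kX)
              qed
              ultimately show ?thesis using Inr uv False True F1 F2 z
                by (simp add: e2_def sh_def cval_def p_def x_def q_def b_def kX)
            qed
          next
            case False2: False
            obtain d1 where d1: "u = p + k + d1" using False2 le_iff_add by (metis not_less)
            obtain d2 where d2: "v = p + k + d2" using F2 le_iff_add by (metis not_less)
            show ?thesis using uv d1 d2
              by (simp add: e2_def sT cval_def p_def x_def q_def b_def kX)
          qed
        qed
      qed
    qed
  qed
  have "m + p < fst T" using m by (simp add: T_def p_def)
  from step_intro[OF this ok2 eq] show ?thesis by (simp add: T_def)
qed


lemma sig_norm_idem[simp]: "sig_norm (sig_norm X) = sig_norm X"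
  by (auto simp: sig_norm_def fun_eq_iff)

lemma sig_sum_0[simp]: "sig_sum A 0 = sig_zero"
  by (simp add: sig_sum_def)

lemma sig_sum_Suc: "sig_sum A (Suc n) = sig_plus (sig_sum A n) (A n)"
  by (simp add: sig_sum_def)

lemma sig_times_Suc: "sig_times C (Suc n) = sig_plus (sig_times C n) C"
  by (simp add: sig_times_def sig_sum_Suc)

lemma sig_zero_norm[simp]: "sig_norm sig_zero = sig_zero"
  by (simp add: sig_norm_def sig_zero_def)

lemma sig_plus_norm[simp]: "sig_norm (sig_plus X Y) = sig_plus X Y"
  by (simp add: sig_plus_def)

lemma sig_sum_norm[simp]: "sig_norm (sig_sum A n) = sig_sum A n"
  by (cases n) (simp_all add: sig_sum_Suc)

lemma sig_times_norm[simp]: "sig_norm (sig_times A n) = sig_times A n"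
  by (simp add: sig_times_def)

lemma plus_norm_l[simp]: "sig_plus (sig_norm X) Y = sig_plus X Y"
  unfolding sig_plus_def by (rule sig_norm_eqI) (auto simp: snd_sig_norm)

lemma plus_norm_r[simp]: "sig_plus X (sig_norm Y) = sig_plus X Y"
  unfolding sig_plus_def by (rule sig_norm_eqI) (auto simp: snd_sig_norm)

lemma star_norm[simp]: "sig_star_exp (sig_norm X) B = sig_star_exp X B"
  unfolding sig_star_exp_def by (rule sig_norm_eqI) (auto simp: snd_sig_norm)

lemma plus_zero_l[simp]: "sig_plus sig_zero X = sig_norm X"
proof -
  have "sig_plus sig_zero X = sig_norm (fst X, snd X)"
    unfolding sig_plus_def by (rule sig_norm_eqI) (auto simp: sig_zero_def)
  then show ?thesis by simp
qed

lemma plus_zero_r[simp]: "sig_plus X sig_zero = sig_norm X"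
proof -
  have "sig_plus X sig_zero = sig_norm (fst X, snd X)"
    unfolding sig_plus_def by (rule sig_norm_eqI) (auto simp: sig_zero_def)
  then show ?thesis by simp
qed

lemma sig_times_0[simp]: "sig_times C 0 = sig_zero"
  by (simp add: sig_times_def)

lemma plus_assoc: "sig_plus (sig_plus X Y) Z = sig_plus X (sig_plus Y Z)"
  unfolding sig_plus_def
  by (rule sig_norm_eqI) (auto simp: snd_sig_norm)

lemma times_Suc_left: "sig_times C (Suc r) = sig_plus C (sig_times C r)"
proof (induction r)
  case 0 then show ?case by (simp add: sig_times_Suc)
next
  case (Suc r)
  have "sig_times C (Suc (Suc r)) = sig_plus (sig_plus C (sig_times C r)) C"
    using Suc by (simp add: sig_times_Suc)
  also have "\<dots> = sig_plus C (sig_times C (Suc r))"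
    by (simp add: plus_assoc sig_times_Suc)
  finally show ?case .
qed

lemma sum_split: "sig_sum A (k + r) = sig_plus (sig_sum A k) (sig_sum (\<lambda>i. A (k + i)) r)"
proof (induction r)
  case 0 then show ?case by simp
next
  case (Suc r)
  then show ?case by (simp add: sig_sum_Suc plus_assoc)
qed

lemma sig_le_refl: "sig_le A A" by (simp add: sig_le_def)

lemma sig_le_trans: "sig_le A B \<Longrightarrow> sig_le B C \<Longrightarrow> sig_le A C"
  unfolding sig_le_def by (rule rtranclp_trans)

lemma step_le: "sig_step B A \<Longrightarrow> sig_le A B"
  unfolding sig_le_def by simp

lemma cong_le:
  assumes "sig_le X' X"
  shows "sig_le (ctx P X' Q B) (ctx P X Q B)"
  using assms unfolding sig_le_def
proof (induction rule: rtranclp_induct)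
  case base then show ?case by simp
next
  case (step Y Z)
  then show ?case using cong_step[OF step(2), of P Q B] by simp
qed

lemma dup_step:
  assumes b: "0 < fst B"
  shows "sig_step (ctx Z C sig_zero B) (ctx Z C C B)"
proof -
  define z where "z = fst Z"
  define c where "c = fst C"
  define T where "T = ctx Z C sig_zero B"
  have fT: "fst T = z + c + fst B" by (simp add: T_def z_def c_def sig_zero_def)
  have sT: "snd T i j = (if i < j \<and> j < z + c + fst B then cval Z C sig_zero B i j else 0)" for i j
    by (simp add: T_def snd_ctx z_def c_def sig_zero_def)
  define e where "e u = (if u < z + c then Inl u else if u < z + c + c then Inr (u - c)
      else Inl (u - c))" for u
  have one: "snd T i (z + c) = 1" if "i < z + c" for i
    using that b by (simp add: sT cval_def z_def c_def sig_zero_def)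
  have ok: "emb_ok T (z + c) (z + c + c + fst B) e"
    unfolding emb_ok_def
  proof safe
    fix a assume "a < z + c + c + fst B"
    then show "ivalid T (z + c) (e a)" using one by (auto simp: e_def fT)
  next
    fix a a' assume "a < a'" "a' < z + c + c + fst B"
    then show "ilt (z + c) (e a) (e a')" by (auto simp: e_def)
  qed
  have eq: "ctx Z C C B = sig_norm (z + c + c + fst B, \<lambda>u v. infl_val T (z + c) (e u) (e v))"
    unfolding ctx_eq
  proof (rule sig_norm_eqI)
    fix u v assume uv: "u < v" "v < fst Z + fst C + fst C + fst B"
    show "cval Z C C B u v = infl_val T (z + c) (e u) (e v)"
    proof (cases "v < z + c")
      case True then show ?thesis using uv
        by (simp add: e_def sT cval_def z_def c_def sig_zero_def)
    next
      case F1: False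
      show ?thesis
      proof (cases "v < z + c + c")
        case T1: True
        show ?thesis
        proof (cases "u < z + c")
          case True
          then show ?thesis using F1 T1 one[of u] one[of "v - c"]
            by (simp add: e_def cval_def z_def c_def)
        next
          case False
          obtain d1 where d1: "u = z + c + d1" using False le_iff_add by (metis not_less)
          obtain d2 where d2: "v = z + c + d2" using F1 le_iff_add by (metis not_less)
          show ?thesis using uv T1 d1 d2
            by (simp add: e_def sT cval_def z_def c_def sig_zero_def)
        qed
      next
        case F2: False
        obtain d2 where d2: "v = z + c + c + d2" using F2 le_iff_add by (metis not_less)
        show ?thesis
        proof (cases "u < z + c")
          case True then show ?thesis using uv d2
            by (simp add: e_def sT cval_def z_def c_def sig_zero_def)
        next
          case False
          show ?thesis
          proof (cases "u < z + c + c")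
            case True
            have o: "snd T (u - c) (z + c) = 1" using one True by simp
            show ?thesis
            proof (cases "d2 = 0")
              case True
              then show ?thesis using uv d2 o False \<open>u < z + c + c\<close>
                by (simp add: e_def cval_def z_def c_def)
            next
              case False
              have "snd T (z + c) (v - c) = snd B 0 d2 + 1" using uv d2 False
                by (simp add: sT cval_def z_def c_def sig_zero_def)
              then show ?thesis using uv d2 o False \<open>\<not> u < z + c\<close> \<open>u < z + c + c\<close>
                by (simp add: e_def cval_def z_def c_def)
            qed
          next
            case False2: False
            obtain d1 where d1: "u = z + c + c + d1" using False2 le_iff_add by (metis not_less)
            show ?thesis using uv d1 d2
              by (simp add: e_def sT cval_def z_def c_def sig_zero_def)
          qed
        qed
      qed
    qed
  qed (simp add: z_def c_def)
  have "z + c < fst T" using b fT by simp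
  from step_intro[OF this ok eq] show ?thesis by (simp add: T_def)
qed

lemma ctx_zero: "ctx Z C sig_zero B = sig_star_exp (sig_plus Z C) B"
  by (simp add: ctx_def)

lemma dup_le:
  assumes b: "0 < fst B"
  shows "sig_le (sig_star_exp (sig_times C (Suc n)) B) (sig_star_exp C B)"
proof (induction n)
  case 0 then show ?case by (simp add: sig_times_Suc sig_le_refl)
next
  case (Suc n)
  have "sig_step (ctx (sig_times C n) C sig_zero B) (ctx (sig_times C n) C C B)"
    by (rule dup_step[OF b])
  then have "sig_le (sig_star_exp (sig_times C (Suc (Suc n))) B) (sig_star_exp (sig_times C (Suc n)) B)"
    by (simp add: ctx_def sig_times_Suc step_le)
  then show ?case using Suc sig_le_trans by blast
qed


lemma exp_plus_one: "sig_exp (sig_plus A sig_one) = sig_star_exp (sig_exp A) sig_one"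
  unfolding sig_exp_def sig_star_exp_def
  by (rule sig_norm_eqI) (auto simp: sig_plus_def snd_sig_norm sig_one_def)

lemma drop_top:
  assumes "0 < fst B"
  shows "sig_le (sig_norm P) (sig_star_exp P B)"
proof -
  have "sig_step (sig_star_exp P B) (sig_norm (fst P, \<lambda>u v. snd (sig_star_exp P B) u v))"
    by (rule restr_step) (use assms in \<open>auto simp: sig_star_exp_def strict_mono_on_def\<close>)
  moreover have "sig_norm (fst P, \<lambda>u v. snd (sig_star_exp P B) u v) = sig_norm (fst P, snd P)"
    by (rule sig_norm_eqI) (auto simp: sig_star_exp_def snd_sig_norm)
  ultimately show ?thesis by (simp add: step_le)
qed

lemma part2: "sig_le (sig_times (sig_exp A) m) (sig_exp (sig_plus A sig_one))"
proof (cases m)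
  case 0
  have "sig_step (sig_exp (sig_plus A sig_one))
          (sig_norm (0, \<lambda>u v. snd (sig_exp (sig_plus A sig_one)) (id u) (id v)))"
    by (rule restr_step) (auto simp: sig_exp_def sig_plus_def sig_one_def)
  moreover have "sig_norm (0, \<lambda>u v. snd (sig_exp (sig_plus A sig_one)) (id u) (id v)) = sig_zero"
    by (simp add: sig_norm_def sig_zero_def)
  ultimately show ?thesis using 0 by (simp add: step_le)
next
  case (Suc n)
  have "sig_le (sig_norm (sig_times (sig_exp A) m)) (sig_star_exp (sig_times (sig_exp A) m) sig_one)"
    by (rule drop_top) (simp add: sig_one_def)
  moreover have "sig_le (sig_star_exp (sig_times (sig_exp A) m) sig_one) (sig_star_exp (sig_exp A) sig_one)"
    using dup_le[of sig_one "sig_exp A" n] Suc by (simp add: sig_one_def)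
  ultimately show ?thesis by (simp add: exp_plus_one sig_le_trans)
qed

lemma pick:
  assumes b: "0 < fst B"
  shows "sig_le (sig_star_exp C B) (ctx P C R B)"
proof -
  define p where "p = fst P"
  define c where "c = fst C"
  define rr where "rr = fst R"
  define g where "g u = (if u < c then u + p else u + p + rr)" for u
  have "sig_step (ctx P C R B) (sig_norm (c + fst B, \<lambda>u v. snd (ctx P C R B) (g u) (g v)))"
    by (rule restr_step) (use b in \<open>auto simp: strict_mono_on_def g_def p_def c_def rr_def\<close>)
  moreover have "sig_norm (c + fst B, \<lambda>u v. snd (ctx P C R B) (g u) (g v)) = sig_star_exp C B"
    unfolding sig_star_exp_def
  proof (rule sig_norm_eqI)
    fix u v assume uv: "u < v" "v < c + fst B"
    show "snd (ctx P C R B) (g u) (g v) = (if v < fst C then snd C u v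
        else if fst C \<le> u then snd B (u - fst C) (v - fst C) + 1 else 1)"
      using uv by (auto simp: snd_ctx cval_def g_def p_def c_def rr_def)
  qed (simp add: c_def)
  ultimately show ?thesis by (simp add: step_le)
qed

lemma part1:
  assumes b: "0 < fst B" and j: "j < n" and le: "\<forall>i<n. sig_le (A i) (A j)"
  shows "sig_equiv (sig_star_exp (sig_sum A n) B) (sig_star_exp (A j) B)"
proof -
  define C where "C = A j"
  define G where "G k = sig_star_exp (sig_plus (sig_sum A k) (sig_times C (n - k))) B" for k
  have G0: "G 0 = sig_star_exp (sig_times C n) B" by (simp add: G_def)
  have Gn: "G n = sig_star_exp (sig_sum A n) B" by (simp add: G_def)
  have Gstep: "sig_le (G (Suc k)) (G k)" if kn: "k < n" for k
  proof -
    obtain r where r: "n - k = Suc r" using kn by (cases "n - k") auto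
    then have r2: "n - Suc k = r" by simp
    have "G k = ctx (sig_sum A k) C (sig_times C r) B"
      by (simp add: G_def ctx_def r times_Suc_left plus_assoc)
    moreover have "G (Suc k) = ctx (sig_sum A k) (A k) (sig_times C r) B"
      by (simp add: G_def ctx_def r2 sig_sum_Suc)
    moreover have "sig_le (A k) C" using le kn by (simp add: C_def)
    ultimately show ?thesis using cong_le by metis
  qed
  have chain: "k \<le> n \<Longrightarrow> sig_le (G k) (G 0)" for k
  proof (induction k)
    case 0 then show ?case by (simp add: sig_le_refl)
  next
    case (Suc k)
    then have "sig_le (G (Suc k)) (G k)" "sig_le (G k) (G 0)" using Gstep by simp_all
    then show ?case by (rule sig_le_trans)
  qed
  obtain n' where n': "n = Suc n'" using j by (cases n) auto
  have d1: "sig_le (sig_star_exp (sig_sum A n) B) (sig_star_exp (A j) B)"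
  proof -
    have "sig_le (G n) (G 0)" using chain[of n] by simp
    moreover have "sig_le (G 0) (sig_star_exp C B)" using dup_le[OF b, of C n'] G0 n' by simp
    ultimately show ?thesis using Gn sig_le_trans C_def by metis
  qed
  have "sig_sum A n = sig_sum A (Suc j + (n - Suc j))" using j by simp
  also have "\<dots> = sig_plus (sig_plus (sig_sum A j) (A j)) (sig_sum (\<lambda>i. A (Suc j + i)) (n - Suc j))"
    by (simp only: sum_split sig_sum_Suc)
  finally have "sig_star_exp (sig_sum A n) B = ctx (sig_sum A j) (A j) (sig_sum (\<lambda>i. A (Suc j + i)) (n - Suc j)) B"
    by (simp add: ctx_def)
  then have d2: "sig_le (sig_star_exp (A j) B) (sig_star_exp (sig_sum A n) B)"
    using pick[OF b] by simp
  show ?thesis using d1 d2 by (simp add: sig_equiv_def)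
qed

lemma sigset_pos:
  assumes "B \<in> SigSet" "B \<noteq> sig_zero"
  shows "0 < fst B"
proof (rule ccontr)
  assume "\<not> 0 < fst B"
  then have f: "fst B = 0" by simp
  obtain X where "B = sig_norm X" using assms(1) unfolding SigSet_def by blast
  then have "B = sig_zero" using f by (simp add: sig_norm_def sig_zero_def)
  then show False using assms(2) by simp
qed

theorem lemma8p3:
  shows "(\<forall>(A :: nat \<Rightarrow> sig) (n :: nat) (B :: sig) (j :: nat).
            (\<forall>i<n. A i \<in> SigSet) \<and> B \<in> SigSet \<and> B \<noteq> sig_zero \<and> j < n
            \<and> (\<forall>i<n. sig_le (A i) (A j))
            \<longrightarrow> sig_equiv (sig_star_exp (sig_sum A n) B) (sig_star_exp (A j) B))
       \<and> (\<forall>(A :: sig) (m :: nat). A \<in> SigSet \<longrightarrow>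
            sig_le (sig_times (sig_exp A) m) (sig_exp (sig_plus A sig_one)))"
proof (intro conjI allI impI)
  fix A :: "nat \<Rightarrow> sig" and n B j
  assume h: "(\<forall>i<n. A i \<in> SigSet) \<and> B \<in> SigSet \<and> B \<noteq> sig_zero \<and> j < n
            \<and> (\<forall>i<n. sig_le (A i) (A j))"
  then have "0 < fst B" using sigset_pos by blast
  then show "sig_equiv (sig_star_exp (sig_sum A n) B) (sig_star_exp (A j) B)"
    using part1 h by blast
next
  fix A :: sig and m :: nat
  show "sig_le (sig_times (sig_exp A) m) (sig_exp (sig_plus A sig_one))" by (rule part2)
qed

end
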